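(* Suppose $S(Y)$ is such that for every $z\in S(Y)$ there exists a strict ordering $P$ of $Y$ with $z_j\in\overline{W}(Y,P)$ for all $j\in\{1,\dots,m\}$, where $z_j=(z_{j,d(y)})_{y\in Y}$. If an ensemble choice aggregator $C$ satisfies ensemble unanimity, then $C$ respects model choice reversal.
   Context: Let $Y$ be a nonempty set of labels and $m\ge 2$ an integer (the number of models). For each $j\in\{1,\dots,m\}$ let $S_j(Y)\subseteq\mathbb{R}^{|Y|}$ be a set of score vectors whose coordinates are indexed by labels (write $w_{d(y)}$ for the coordinate of $w$ corresponding to label $y$), and let $S(Y)=\prod_{j=1}^m S_j(Y)$. An element $z\in S(Y)$ is written $z=(z_{j,d(y)})_{j,y}$, where $z_{j,d(y)}$ denotes model $j$'s score for label $y$. For a strict (total) ordering $P$ of $Y$, $\overline{W}(Y,P)=\{w\in\mathbb{R}^{|Y|}: \text{for all } y,y'\in Y,\ y\,P\,y' \iff w_{d(y)}>w_{d(y')}\}$. An ensemble choice aggregator is a set-valued function $C:(2^Y\setminus\{\emptyset\})\times S(Y)\to 2^Y\setminus\{\emptyset\}$ such that for every nonempty $Y^*\subseteq Y$ and every $z\in S(Y)$: (i) $C(Y^*,z)\subseteq Y^*$; and (ii) for every $y\in Y^*$, if there does not exist $y'\in Y^*$ with $\{y'\}=C(\{y,y'\},z)$, then $y\in C(Y^*,z)$. Ensemble unanimity: for all $y,y'\in Y$ and all $z\in S(Y)$, if $z_{j,d(y)}>z_{j,d(y')}$ for all $j$ then $\{y\}=C(\{y,y'\},z)$. Model choice reversal: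 for all $y,y'\in Y$ and all $z,z'\in S(Y)$, whenever $y\in C(\{y,y'\},z)$, $y'\notin C(\{y,y'\},z)$ and $y'\in C(\{y,y'\},z')$, there exists $j$ with $z_{j,d(y)}>z_{j,d(y')}$ and $z'_{j,d(y)}<z'_{j,d(y')}$. *)

theory Defs
  imports Complex_Main "HOL-Library.FuncSet"
begin

text \<open>A score vector in R^|Y| indexed by
labels is an extensional function w in Y ->E UNIV, with w y the coordinate d(y).
A profile z assigns to each model j in {1..m} a score vector z j; the profile
space S(Y) = prod_j S_j(Y) is PiE {1..m} Sj.\<close>

definition profile_space :: "nat \<Rightarrow> (nat \<Rightarrow> ('y \<Rightarrow> real) set) \<Rightarrow> (nat \<Rightarrow> 'y \<Rightarrow> real) set" where
  "profile_space m Sj = PiE {1..m} Sj"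

definition Wbar :: "'y set \<Rightarrow> 'y rel \<Rightarrow> ('y \<Rightarrow> real) set" where
  "Wbar Y P = {w \<in> Y \<rightarrow>\<^sub>E (UNIV :: real set).
      \<forall>y\<in>Y. \<forall>y'\<in>Y. ((y, y') \<in> P \<longleftrightarrow> w y > w y')}"

definition ensemble_choice_aggregator ::
  "'y set \<Rightarrow> (nat \<Rightarrow> 'y \<Rightarrow> real) set \<Rightarrow> ('y set \<Rightarrow> (nat \<Rightarrow> 'y \<Rightarrow> real) \<Rightarrow> 'y set) \<Rightarrow> bool" where
  "ensemble_choice_aggregator Y S C \<longleftrightarrow>
     (\<forall>Ys z. Ys \<subseteq> Y \<and> Ys \<noteq> {} \<and> z \<in> S \<longrightarrow>
        C Ys z \<subseteq> Ys \<and> C Ys z \<noteq> {} \<and>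
        (\<forall>y\<in>Ys. \<not> (\<exists>y'\<in>Ys. {y'} = C {y, y'} z) \<longrightarrow> y \<in> C Ys z))"

definition ensemble_unanimity ::
  "'y set \<Rightarrow> nat \<Rightarrow> (nat \<Rightarrow> 'y \<Rightarrow> real) set \<Rightarrow> ('y set \<Rightarrow> (nat \<Rightarrow> 'y \<Rightarrow> real) \<Rightarrow> 'y set) \<Rightarrow> bool" where
  "ensemble_unanimity Y m S C \<longleftrightarrow>
     (\<forall>y\<in>Y. \<forall>y'\<in>Y. \<forall>z\<in>S.
        (\<forall>j\<in>{1..m}. z j y > z j y') \<longrightarrow> {y} = C {y, y'} z)"

definition model_choice_reversal ::
  "'y set \<Rightarrow> nat \<Rightarrow> (nat \<Rightarrow> 'y \<Rightarrow> real) set \<Rightarrow> ('y set \<Rightarrow> (nat \<Rightarrow> 'y \<Rightarrow> real) \<Rightarrow> 'y set) \<Rightarrow> bool" where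
  "model_choice_reversal Y m S C \<longleftrightarrow>
     (\<forall>y\<in>Y. \<forall>y'\<in>Y. \<forall>z\<in>S. \<forall>z'\<in>S.
        y \<in> C {y, y'} z \<and> y' \<notin> C {y, y'} z \<and> y' \<in> C {y, y'} z' \<longrightarrow>
        (\<exists>j\<in>{1..m}. z j y > z j y' \<and> z' j y < z' j y'))"

end

theory Submission
  imports Defs
begin

theorem lemma4:
  fixes Y :: "'y set" and m :: nat
    and Sj :: "nat \<Rightarrow> ('y \<Rightarrow> real) set"
    and C :: "'y set \<Rightarrow> (nat \<Rightarrow> 'y \<Rightarrow> real) \<Rightarrow> 'y set"
  assumes "finite Y" and "Y \<noteq> {}" and "m \<ge> 2"
    and "\<forall>j\<in>{1..m}. Sj j \<subseteq> Y \<rightarrow>\<^sub>E (UNIV :: real set)"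
    and "\<forall>z\<in>profile_space m Sj. \<exists>P. strict_linear_order_on Y P \<and>
           (\<forall>j\<in>{1..m}. z j \<in> Wbar Y P)"
    and "ensemble_choice_aggregator Y (profile_space m Sj) C"
    and "ensemble_unanimity Y m (profile_space m Sj) C"
  shows "model_choice_reversal Y m (profile_space m Sj) C"
proof -
  have dich: "(\<forall>j\<in>{1..m}. z j y > z j y') \<or> (\<forall>j\<in>{1..m}. z j y' > z j y)"
    if zS: "z \<in> profile_space m Sj" and yY: "y \<in> Y" and y'Y: "y' \<in> Y" and ne: "y \<noteq> y'"
    for z y y'
  proof -
    obtain P where P1: "strict_linear_order_on Y P" and P2: "\<forall>j\<in>{1..m}. z j \<in> Wbar Y P"
      using assms(5) zS by blast
    have tot: "total_on Y P" using P1 by (simp add: strict_linear_order_on_def)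
    have or: "(y, y') \<in> P \<or> (y', y) \<in> P"
      using tot yY y'Y ne unfolding total_on_def by blast
    have W: "((y, y') \<in> P \<longleftrightarrow> z j y > z j y') \<and> ((y', y) \<in> P \<longleftrightarrow> z j y' > z j y)"
      if "j \<in> {1..m}" for j
    proof -
      have "z j \<in> Wbar Y P" using P2 that by blast
      then have "\<forall>a\<in>Y. \<forall>b\<in>Y. ((a, b) \<in> P \<longleftrightarrow> z j a > z j b)"
        unfolding Wbar_def by blast
      then show ?thesis using yY y'Y by blast
    qed
    show ?thesis
    proof (cases "(y, y') \<in> P")
      case True
      then show ?thesis using W by blast
    next
      case False
      then have "(y', y) \<in> P" using or by blast
      then show ?thesis using W by blast
    qed
  qed
  have un: "{a} = C {a, b} z" if "z \<in> profile_space m Sj" "a \<in> Y" "b \<in> Y"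
    "\<forall>j\<in>{1..m}. z j a > z j b" for z a b
    using assms(7) that unfolding ensemble_unanimity_def by blast
  show ?thesis unfolding model_choice_reversal_def
  proof (intro ballI impI)
    fix y y' z z'
    assume yY: "y \<in> Y" and y'Y: "y' \<in> Y" and zS: "z \<in> profile_space m Sj"
      and z'S: "z' \<in> profile_space m Sj"
      and H: "y \<in> C {y, y'} z \<and> y' \<notin> C {y, y'} z \<and> y' \<in> C {y, y'} z'"
    have H1: "y \<in> C {y, y'} z" and H2: "y' \<notin> C {y, y'} z" and H3: "y' \<in> C {y, y'} z'"
      using H by simp_all
    have ne: "y \<noteq> y'" using H1 H2 by metis
    have ins: "{y', y} = {y, y'}" by (rule insert_commute)
    have A: "\<forall>j\<in>{1..m}. z j y > z j y'"
    proof (rule ccontr)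
      assume "\<not> ?thesis"
      then have "\<forall>j\<in>{1..m}. z j y' > z j y" using dich[OF zS yY y'Y ne] by blast
      then have "{y'} = C {y', y} z" using un[OF zS y'Y yY] by blast
      then have "C {y, y'} z = {y'}" using ins by simp
      then show False using H1 ne by simp
    qed
    have B: "\<forall>j\<in>{1..m}. z' j y' > z' j y"
    proof (rule ccontr)
      assume "\<not> ?thesis"
      then have "\<forall>j\<in>{1..m}. z' j y > z' j y'" using dich[OF z'S yY y'Y ne] by blast
      then have "C {y, y'} z' = {y}" using un[OF z'S yY y'Y] by simp
      then show False using H3 ne by simp
    qed
    have one: "(1::nat) \<in> {1..m}" using assms(3) by simp
    show "\<exists>j\<in>{1..m}. z j y' < z j y \<and> z' j y < z' j y'"
    proof
      show "z 1 y' < z 1 y \<and> z' 1 y < z' 1 y'" using A B one by blast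
    qed (rule one)
  qed
qed

end
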